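(* Let $k$ be a field with $\mathrm{char}(k)\neq2$, let $m\in\{3,4\}$, and let $Q_1,Q_2$ be quadratic forms in $m$ variables over $k$ with matrices of second partial derivatives $A$ and $B$. Assume that $\ker(A)\cap\ker(B)=0$ (i.e. $\{Q_1=Q_2=0\}\subset\mathbb{P}^{m-1}$ is not a cone) and that the binary form $\det(Ax+Bz)$ is identically zero. Then: (i) if $m=3$, $(Q_1,Q_2)$ is $k$-equivalent to $(x_1x_2,\ x_2x_3)$; (ii) if $m=4$, $(Q_1,Q_2)$ is $k$-equivalent to $(x_1x_2,\ x_2x_3-x_4^2)$.
   Context: Two pairs of quadratic forms in $m$ variables over $k$ are $k$-equivalent if they lie in the same orbit of $GL_2(k)\times GL_m(k)$, where $(M,N)$ acts by replacing $(Q_1,Q_2)$ by $(m_{11}Q_1+m_{12}Q_2,\ m_{21}Q_1+m_{22}Q_2)$ and then substituting $x_j\leftarrow\sum_i n_{ij}x_i$. *)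

theory Defs
  imports "HOL-Analysis.Analysis" "HOL-Computational_Algebra.Polynomial" "HOL-Library.Numeral_Type"
begin

definition is_quadratic_form :: "('a::field ^ 'n \<Rightarrow> 'a) \<Rightarrow> bool" where
  "is_quadratic_form Q \<longleftrightarrow>
     (\<exists>c::'n \<Rightarrow> 'n \<Rightarrow> 'a. \<forall>x. Q x = (\<Sum>i\<in>UNIV. \<Sum>j\<in>UNIV. c i j * x$i * x$j))"

text \<open>A is the matrix of second partial derivatives of Q:
  for Q = sum c_ij x_i x_j one has d^2 Q / dx_i dx_j = c_ij + c_ji.\<close>
definition is_hessian :: "'a::field ^ 'n ^ 'n \<Rightarrow> ('a ^ 'n \<Rightarrow> 'a) \<Rightarrow> bool" where
  "is_hessian A Q \<longleftrightarrow>
     (\<exists>c::'n \<Rightarrow> 'n \<Rightarrow> 'a. (\<forall>x. Q x = (\<Sum>i\<in>UNIV. \<Sum>j\<in>UNIV. c i j * x$i * x$j))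
        \<and> (\<forall>i j. A$i$j = c i j + c j i))"

text \<open>The binary form det(A x + B z) as a bivariate polynomial
  (inner variable x, outer variable z).\<close>
definition binary_det :: "'a::field ^ 'n ^ 'n \<Rightarrow> 'a ^ 'n ^ 'n \<Rightarrow> 'a poly poly" where
  "binary_det A B = det (\<chi> i j. [: [:0, A$i$j:], [:B$i$j:] :])"

text \<open>(P1,P2) is in the GL_2(k) x GL_m(k)-orbit of (Q1,Q2): P_r = (m_r1 Q1 + m_r2 Q2)
  after substituting x_j <- sum_i n_ij x_i.\<close>
definition k_equiv :: "('a::field ^ 'n \<Rightarrow> 'a) \<Rightarrow> ('a ^ 'n \<Rightarrow> 'a) \<Rightarrow>
                       ('a ^ 'n \<Rightarrow> 'a) \<Rightarrow> ('a ^ 'n \<Rightarrow> 'a) \<Rightarrow> bool" where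
  "k_equiv Q1 Q2 P1 P2 \<longleftrightarrow>
     (\<exists>(M::'a^2^2) (N::'a^'n^'n). invertible M \<and> invertible N \<and>
        (\<forall>x. P1 x = M$1$1 * Q1 (\<chi> j. \<Sum>i\<in>UNIV. N$i$j * x$i) + M$1$2 * Q2 (\<chi> j. \<Sum>i\<in>UNIV. N$i$j * x$i)) \<and>
        (\<forall>x. P2 x = M$2$1 * Q1 (\<chi> j. \<Sum>i\<in>UNIV. N$i$j * x$i) + M$2$2 * Q2 (\<chi> j. \<Sum>i\<in>UNIV. N$i$j * x$i)))"

end

theory Submission
  imports Defs "HOL-Computational_Algebra.Fraction_Field"
begin

lemma det_hom:
  fixes h :: "'a::comm_ring_1 \<Rightarrow> 'b::comm_ring_1"
  assumes add: "\<And>a b. h (a + b) = h a + h b" and mult: "\<And>a b. h (a * b) = h a * h b"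
    and one: "h 1 = 1" and neg: "\<And>a. h (- a) = - h a"
  shows "det (\<chi> i j. h (M$i$j)) = h (det M)"
proof -
  have z: "h 0 = 0" using add[of 0 0] by simp
  have hs: "h (sum g S) = sum (\<lambda>x. h (g x)) S" for g :: "_ \<Rightarrow> 'a" and S
    using sum_comp_morphism[of h g S, OF z add] by (simp add: o_def)
  have hp: "h (prod g S) = prod (\<lambda>x. h (g x)) S" for g :: "_ \<Rightarrow> 'a" and S
    by (induct S rule: infinite_finite_induct) (simp_all add: one mult)
  have hi: "h (of_int (sign p)) = of_int (sign p)" for p :: "'c \<Rightarrow> 'c"
    by (cases "sign p = 1") (auto simp: sign_def one neg)
  show ?thesis unfolding det_def hs
    by (simp add: mult hp hi)
qed

lemma poly_ker:
  fixes M :: "'a::field poly ^'n^'n"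
  assumes "det M = 0"
  shows "\<exists>y. y \<noteq> 0 \<and> M *v y = 0"
proof -
  define h :: "'a poly \<Rightarrow> 'a poly fract" where "h a = Fract a 1" for a
  have hadd: "h (a + b) = h a + h b" for a b by (simp add: h_def)
  have hmult: "h (a * b) = h a * h b" for a b by (simp add: h_def)
  have hneg: "h (- a) = - h a" for a by (simp add: h_def)
  have hone: "h 1 = 1" by (simp add: h_def One_fract_def)
  have hinj: "h a = 0 \<longleftrightarrow> a = 0" for a by (simp add: h_def Zero_fract_def eq_fract)
  have hs: "h (sum g S) = sum (\<lambda>x. h (g x)) S" for g :: "_ \<Rightarrow> 'a poly" and S
    using sum_comp_morphism[of h g S] hadd hinj by (simp add: o_def)
  have hp: "h (prod g S) = prod (\<lambda>x. h (g x)) S" for g :: "_ \<Rightarrow> 'a poly" and S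
    by (induct S rule: infinite_finite_induct) (simp_all add: hone hmult)
  define M' where "M' = (\<chi> i j. h (M$i$j))"
  have "det M' = 0" unfolding M'_def
    using det_hom[of h M, OF hadd hmult hone hneg] assms hinj by simp
  then have "\<not> invertible M'" by (simp add: invertible_det_nz)
  then obtain x where x0: "x \<noteq> 0" and Mx: "M' *v x = 0"
    unfolding invertible_left_inverse matrix_left_invertible_ker by blast
  have "\<forall>i. \<exists>a b. x$i = Fract a b \<and> b \<noteq> 0" by (metis Fract_cases)
  then obtain a b where ab: "\<And>i. x$i = Fract (a i) (b i)" "\<And>i. b i \<noteq> 0" by metis
  define D where "D = prod b UNIV"
  have D0: "D \<noteq> 0" using ab(2) by (simp add: D_def)
  define y where "y = (\<chi> i. a i * prod b (UNIV - {i}))"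
  have hy: "h (y$i) = h D * x$i" for i
  proof -
    have "D = b i * prod b (UNIV - {i})" unfolding D_def
      by (simp add: prod.remove)
    then show ?thesis using ab[of i]
      by (simp add: h_def y_def eq_fract mult.commute mult.left_commute)
  qed
  have "h ((M *v y)$i) = 0" for i
  proof -
    have "h ((M *v y)$i) = (\<Sum>j\<in>UNIV. h (M$i$j) * h (y$j))"
      by (simp add: matrix_vector_mult_def hs hmult)
    also have "\<dots> = (\<Sum>j\<in>UNIV. h (M$i$j) * (h D * x$j))" by (simp only: hy)
    also have "\<dots> = h D * (\<Sum>j\<in>UNIV. M'$i$j * x$j)"
      unfolding sum_distrib_left M'_def by (simp add: mult.left_commute)
    also have "\<dots> = h D * (M' *v x)$i" by (simp add: matrix_vector_mult_def)
    finally show ?thesis using Mx by simp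
  qed
  then have "(M *v y)$i = 0" for i using hinj by blast
  then have My: "M *v y = 0" by (simp add: vec_eq_iff)
  obtain i where xi: "x$i \<noteq> 0" using x0 by (auto simp: vec_eq_iff)
  have hD: "h D \<noteq> 0" using D0 hinj by blast
  have "h (y$i) \<noteq> 0" using hy[of i] xi hD by simp
  then have "y$i \<noteq> 0" using hinj[of 0] by auto
  then have "y \<noteq> 0" by auto
  with My show ?thesis by blast
qed

definition vdot :: "'a::field^'n \<Rightarrow> 'a^'n \<Rightarrow> 'a" where
  "vdot x y = (\<Sum>i\<in>UNIV. x$i * y$i)"

lemma vdot_add_left: "vdot (x + y) z = vdot x z + vdot y z"
  by (simp add: vdot_def distrib_right sum.distrib)
lemma vdot_add_right: "vdot z (x + y) = vdot z x + vdot z y"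
  by (simp add: vdot_def distrib_left sum.distrib)
lemma vdot_scale_left: "vdot (c *s x) y = c * vdot x y"
  by (simp add: vdot_def sum_distrib_left mult.assoc)
lemma vdot_scale_right: "vdot x (c *s y) = c * vdot x y"
  by (simp add: vdot_def sum_distrib_left mult_ac)
lemma vdot_neg_left: "vdot (- x) y = - vdot x y"
  by (simp add: vdot_def sum_negf)
lemma vdot_neg_right: "vdot x (- y) = - vdot x y"
  by (simp add: vdot_def sum_negf)
lemma vdot_diff_left: "vdot (x - y) z = vdot x z - vdot y z"
  by (simp add: vdot_def left_diff_distrib sum_subtractf)
lemma vdot_diff_right: "vdot z (x - y) = vdot z x - vdot z y"
  by (simp add: vdot_def right_diff_distrib sum_subtractf)
lemma vdot_zero_left[simp]: "vdot 0 y = 0" by (simp add: vdot_def)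
lemma vdot_zero_right[simp]: "vdot x 0 = 0" by (simp add: vdot_def)
lemma vdot_comm: "vdot x y = vdot y x" by (simp add: vdot_def mult.commute)
lemma vdot_axis: "vdot z (axis i 1) = z$i"
proof -
  have "vdot z (axis i 1) = (\<Sum>j\<in>UNIV. if j = i then z$j else 0)"
    unfolding vdot_def by (rule sum.cong) (auto simp: axis_def)
  then show ?thesis by simp
qed

lemma vdot_sym_mat:
  assumes "\<And>i j. P$i$j = P$j$i"
  shows "vdot (P *v x) y = vdot x (P *v y)"
proof -
  have "vdot (P *v x) y = (\<Sum>i\<in>UNIV. \<Sum>j\<in>UNIV. P$i$j * x$j * y$i)"
    by (simp add: vdot_def matrix_vector_mult_def sum_distrib_right)
  also have "\<dots> = (\<Sum>j\<in>UNIV. \<Sum>i\<in>UNIV. P$i$j * x$j * y$i)" by (rule sum.swap)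
  also have "\<dots> = vdot x (P *v y)"
    by (simp add: vdot_def matrix_vector_mult_def sum_distrib_left assms mult_ac)
  finally show ?thesis .
qed

lemma vdot_span:
  assumes "\<forall>s\<in>T. vdot z s = 0" and "x \<in> vec.span T"
  shows "vdot z x = 0"
  using assms(2)
proof (induct rule: vec.span_induct_alt)
  case base then show ?case by simp
next
  case (step c x y) then show ?case using assms(1) by (simp add: vdot_add_right vdot_scale_right)
qed

lemma vdot_all_zero:
  assumes "\<forall>x. vdot z x = 0" shows "z = 0"
  using assms vdot_axis by (metis vec_eq_iff zero_index)

definition chain :: "'a::field^'n^'n \<Rightarrow> 'a^'n^'n \<Rightarrow> (nat \<Rightarrow> 'a^'n) \<Rightarrow> nat \<Rightarrow> bool" where
  "chain P Q v d \<longleftrightarrow> (\<forall>k>d. v k = 0) \<and> (\<exists>k. v k \<noteq> 0) \<and> P *v v 0 = 0 \<and>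
      (\<forall>k. P *v v (Suc k) + Q *v v k = 0)"

lemma chain_iso:
  assumes sP: "\<And>i j. P$i$j = P$j$i" and sQ: "\<And>i j. Q$i$j = Q$j$i"
    and c0: "P *v v 0 = 0" and cS: "\<And>k. P *v v (Suc k) + Q *v v k = 0"
  shows "vdot (P *v v i) (v j) = 0"
proof (induct i arbitrary: j)
  case 0 then show ?case using c0 by simp
next
  case (Suc i)
  have e: "P *v v (Suc k) = - (Q *v v k)" for k using cS[of k] by (simp add: eq_neg_iff_add_eq_0)
  have "vdot (P *v v (Suc i)) (v j) = - vdot (Q *v v i) (v j)" by (simp add: e vdot_neg_left)
  also have "\<dots> = - vdot (v i) (Q *v v j)" by (simp add: vdot_sym_mat[OF sQ])
  also have "\<dots> = vdot (v i) (P *v v (Suc j))" by (simp add: e vdot_neg_right)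
  also have "\<dots> = vdot (P *v v i) (v (Suc j))" by (simp add: vdot_sym_mat[OF sP])
  also have "\<dots> = 0" by (rule Suc)
  finally show ?case .
qed

lemma chain_iso_Q:
  assumes sP: "\<And>i j. P$i$j = P$j$i" and sQ: "\<And>i j. Q$i$j = Q$j$i"
    and c0: "P *v v 0 = 0" and cS: "\<And>k. P *v v (Suc k) + Q *v v k = 0"
  shows "vdot (Q *v v i) (v j) = 0"
proof -
  have e: "Q *v v i = - (P *v v (Suc i))" using cS[of i] by (simp add: eq_neg_iff_add_eq_0 add.commute)
  show ?thesis using chain_iso[OF sP sQ c0 cS, of "Suc i" j] by (simp add: e vdot_neg_left)
qed

lemma dim_contra:
  fixes v0 v1 v2 w0 w1 :: "'a::field^'n"
  assumes card: "CARD('n) \<le> 4"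
    and ind: "\<And>a b c. a *s v0 + b *s v1 + c *s v2 = 0 \<Longrightarrow> a = 0 \<and> b = 0 \<and> c = 0"
    and w0: "w0 \<noteq> 0" and w1: "\<And>c. w1 \<noteq> c *s w0"
    and o0: "\<forall>s\<in>{v2,v1,v0}. vdot w0 s = 0" and o1: "\<forall>s\<in>{v2,v1,v0}. vdot w1 s = 0"
  shows False
proof -
  define S where "S = {v2, v1, v0}"
  have n0: "v0 \<noteq> 0" using ind[of 1 0 0] by auto
  have n1: "v1 \<notin> vec.span {v0}"
  proof
    assume "v1 \<in> vec.span {v0}"
    then obtain k where "v1 = k *s v0" by (auto simp: vec.span_singleton)
    then have "k *s v0 + (-1) *s v1 + 0 *s v2 = 0" by simp
    from ind[OF this] show False by simp
  qed
  have n2: "v2 \<notin> vec.span {v1, v0}"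
  proof
    assume "v2 \<in> vec.span {v1, v0}"
    then obtain k where "v2 - k *s v1 \<in> vec.span {v0}" by (auto simp: vec.span_breakdown_eq)
    then obtain l where "v2 - k *s v1 = l *s v0" by (auto simp: vec.span_singleton)
    then have "l *s v0 + k *s v1 + (-1) *s v2 = 0" by (simp add: algebra_simps)
    from ind[OF this] show False by simp
  qed
  have dS: "vec.dim S = 3" unfolding S_def
    using n0 n1 n2 by (simp add: vec.dim_insert)
  have "\<exists>e. vec.span (insert e S) = UNIV"
  proof (cases "vec.span S = UNIV")
    case True
    have "vec.span S \<subseteq> vec.span (insert 0 S)" by (rule vec.span_mono) auto
    then have "vec.span (insert 0 S) = UNIV" using True by auto
    then show ?thesis by blast
  next
    case False
    then obtain e where e: "e \<notin> vec.span S" by auto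
    have dim4: "vec.dim (insert e S) = 4" using e dS by (simp add: vec.dim_insert)
    have dimU: "vec.dim (UNIV :: ('a^'n) set) = CARD('n)" by (simp add: card_cart_basis)
    show ?thesis
    proof (rule ccontr)
      assume "\<not> (\<exists>e'. vec.span (insert e' S) = UNIV)"
      then have "vec.span (insert e S) \<noteq> UNIV" by blast
      then have "vec.span (insert e S) \<subset> vec.span (UNIV :: ('a^'n) set)" by (auto simp: vec.span_UNIV)
      then have "vec.dim (insert e S) < vec.dim (UNIV :: ('a^'n) set)" by (rule vec.dim_psubset)
      then show False using dim4 dimU card by simp
    qed
  qed
  then obtain e where sp: "vec.span (insert e S) = UNIV" by blast
  define a where "a = vdot w0 e"
  define b where "b = vdot w1 e"
  define z where "z = b *s w0 - a *s w1"
  have zz: "\<forall>s\<in>insert e S. vdot z s = 0"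
    using o0 o1 by (simp add: z_def S_def a_def b_def vdot_diff_left vdot_scale_left mult.commute)
  have "vdot z x = 0" for x by (rule vdot_span[OF zz]) (simp add: sp)
  then have "\<forall>x. vdot z x = 0" by blast
  then have z0: "z = 0" by (rule vdot_all_zero)
  show False
  proof (cases "a = 0")
    case False
    have "a *s w1 = b *s w0" using z0 unfolding z_def by (metis right_minus_eq)
    then have "(1/a) *s (a *s w1) = (1/a) *s (b *s w0)" by simp
    then have "w1 = (b / a) *s w0" using False by (simp add: vector_smult_assoc)
    then show False using w1 by blast
  next
    case True
    show False
    proof (cases "b = 0")
      case False
      then show False using z0 True w0 unfolding z_def by simp
    next
      case True
      then have ww: "\<forall>s\<in>insert e S. vdot w0 s = 0" using o0 \<open>a = 0\<close> by (auto simp: a_def S_def)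
      have "vdot w0 x = 0" for x by (rule vdot_span[OF ww]) (simp add: sp)
      then have "\<forall>x. vdot w0 x = 0" by blast
      then show False using vdot_all_zero w0 by blast
    qed
  qed
qed

lemma chain_min:
  fixes P Q :: "'a::field^'n^'n"
  assumes card: "CARD('n) \<le> 4"
    and sP: "\<And>i j. P$i$j = P$j$i" and sQ: "\<And>i j. Q$i$j = Q$j$i"
    and nc: "\<forall>x. P *v x = 0 \<and> Q *v x = 0 \<longrightarrow> x = 0"
    and ex: "chain P Q v d"
  shows "\<exists>w u. P *v w = 0 \<and> P *v u + Q *v w = 0 \<and> Q *v u = 0 \<and> (w \<noteq> 0 \<or> u \<noteq> 0)"
proof -
  define d0 where "d0 = (LEAST d. \<exists>v. chain P Q v d)"
  have "\<exists>v. chain P Q v d0" unfolding d0_def by (rule LeastI[of _ d]) (use ex in blast)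
  then obtain v where c: "chain P Q v d0" by blast
  have minimal: "\<not> chain P Q v' d'" if "d' < d0" for v' d'
    using not_less_Least[of d' "\<lambda>d. \<exists>v. chain P Q v d"] that unfolding d0_def by blast
  from c have cv: "\<And>k. k > d0 \<Longrightarrow> v k = 0" and nz: "\<exists>k. v k \<noteq> 0"
    and c0: "P *v v 0 = 0" and cS: "\<And>k. P *v v (Suc k) + Q *v v k = 0"
    unfolding chain_def by blast+
  have d00: "d0 \<noteq> 0"
  proof
    assume "d0 = 0"
    then have "v 1 = 0" using cv by simp
    then have "Q *v v 0 = 0" using cS[of 0] by simp
    then have "v 0 = 0" using nc c0 by blast
    moreover have "v k = 0" if "k \<noteq> 0" for k using cv that \<open>d0 = 0\<close> by simp
    ultimately show False using nz by metis
  qed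
  show ?thesis
  proof (cases "d0 = 1")
    case True
    have "v 2 = 0" using cv True by simp
    then have "Q *v v 1 = 0" using cS[of 1] by (simp add: numeral_2_eq_2)
    moreover have "v 0 \<noteq> 0 \<or> v 1 \<noteq> 0"
    proof -
      obtain k where "v k \<noteq> 0" using nz by blast
      then have "k \<le> 1" using cv True by (meson not_le)
      then have "k = 0 \<or> k = 1" by auto
      then show ?thesis using \<open>v k \<noteq> 0\<close> by auto
    qed
    ultimately show ?thesis using c0 cS[of 0] by (intro exI[of _ "v 0"] exI[of _ "v 1"]) simp
  next
    case False
    with d00 have d2: "d0 \<ge> 2" by simp
    have v0: "v 0 \<noteq> 0"
    proof
      assume v00: "v 0 = 0"
      have "chain P Q (\<lambda>k. v (Suc k)) (d0 - 1)" unfolding chain_def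
      proof (intro conjI allI impI)
        show "v (Suc k) = 0" if "k > d0 - 1" for k using cv that by simp
        obtain k where "v k \<noteq> 0" using nz by blast
        then have "k \<noteq> 0" using v00 by (cases k) auto
        then obtain k' where "k = Suc k'" using not0_implies_Suc by blast
        then show "\<exists>k. v (Suc k) \<noteq> 0" using \<open>v k \<noteq> 0\<close> by blast
        show "P *v v (Suc 0) = 0" using cS[of 0] v00 by simp
        show "P *v v (Suc (Suc k)) + Q *v v (Suc k) = 0" for k by (rule cS)
      qed
      then show False using minimal[of "d0 - 1"] d2 by simp
    qed
    have w0: "Q *v v 0 \<noteq> 0" using nc c0 v0 by blast
    have w1: "Q *v v 1 \<noteq> c *s (Q *v v 0)" for c
    proof
      assume h: "Q *v v 1 = c *s (Q *v v 0)"
      define y where "y = (\<lambda>k::nat. if k = 0 then v 0 else if k = 1 then v 1 - c *s v 0 else 0)"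
      have "chain P Q y 1" unfolding chain_def
      proof (intro conjI allI impI)
        show "y k = 0" if "k > 1" for k using that by (simp add: y_def)
        show "\<exists>k. y k \<noteq> 0" using v0 by (intro exI[of _ 0]) (simp add: y_def)
        show "P *v y 0 = 0" using c0 by (simp add: y_def)
        show "P *v y (Suc k) + Q *v y k = 0" for k
        proof (cases k)
          case 0
          have "P *v (v 1 - c *s v 0) + Q *v v 0 = (P *v v (Suc 0) + Q *v v 0) - c *s (P *v v 0)"
            by (simp add: matrix_vector_mult_diff_distrib vector_scalar_commute)
          also have "\<dots> = 0" using cS[of 0] c0 by simp
          finally show ?thesis using 0 by (simp add: y_def)
        next
          case (Suc k')
          show ?thesis
          proof (cases k')
            case 0
            have "Q *v (v 1 - c *s v 0) = 0" using h
              by (simp add: matrix_vector_mult_diff_distrib vector_scalar_commute)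
            then show ?thesis using Suc 0 by (simp add: y_def)
          next
            case (Suc k'')
            then show ?thesis using \<open>k = Suc k'\<close> by (simp add: y_def)
          qed
        qed
      qed
      then show False using minimal[of 1] d2 by simp
    qed
    have e1: "P *v v 1 = - (Q *v v 0)" using cS[of 0] by (simp add: eq_neg_iff_add_eq_0)
    have e2: "P *v v 2 = - (Q *v v 1)" using cS[of 1] by (simp add: eq_neg_iff_add_eq_0 numeral_2_eq_2)
    have ind: "a = 0 \<and> b = 0 \<and> cc = 0" if h: "a *s v 0 + b *s v 1 + cc *s v 2 = 0" for a b cc
    proof -
      have "0 = P *v (a *s v 0 + b *s v 1 + cc *s v 2)" using h by simp
      also have "\<dots> = a *s (P *v v 0) + b *s (P *v v 1) + cc *s (P *v v 2)"
        by (simp only: matrix_vector_right_distrib vector_scalar_commute)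
      also have "\<dots> = - (b *s (Q *v v 0) + cc *s (Q *v v 1))"
        unfolding c0 e1 e2 by (simp add: vector_smult_rneg)
      finally have hb: "b *s (Q *v v 0) + cc *s (Q *v v 1) = 0" by (metis neg_0_equal_iff_equal)
      have cc0: "cc = 0"
      proof (rule ccontr)
        assume "cc \<noteq> 0"
        have "- (b *s (Q *v v 0)) = cc *s (Q *v v 1)" using hb by (metis neg_eq_iff_add_eq_0)
        then have "cc *s (Q *v v 1) = - (b *s (Q *v v 0))" by simp
        then have "(1/cc) *s (cc *s (Q *v v 1)) = (1/cc) *s (- (b *s (Q *v v 0)))" by simp
        then have "Q *v v 1 = (- (b / cc)) *s (Q *v v 0)" using \<open>cc \<noteq> 0\<close>
          by (simp add: vector_smult_assoc vector_smult_rneg vector_smult_lneg)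
        then show False using w1 by blast
      qed
      then have "b *s (Q *v v 0) = 0" using hb by simp
      then have b0: "b = 0" using w0 by (simp add: vector_mul_eq_0)
      then have "a *s v 0 = 0" using h cc0 by simp
      then have "a = 0" using v0 by (simp add: vector_mul_eq_0)
      then show ?thesis using b0 cc0 by simp
    qed
    have iso: "vdot (Q *v v i) (v j) = 0" for i j
      by (rule chain_iso_Q[OF sP sQ c0 cS])
    show ?thesis
      using dim_contra[of "v 0" "v 1" "v 2" "Q *v v 0" "Q *v v 1", OF card ind w0 w1] iso by simp
  qed
qed

lemma bdet_chain:
  fixes A B :: "'a::field^'n^'n"
  assumes "binary_det A B = 0"
  shows "\<exists>v d. chain B A v d"
proof -
  define M where "M = (\<chi> i j. [: [:0, A$i$j:], [:B$i$j:] :])"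
  define M2 where "M2 = (\<chi> i j. [: B$i$j, A$i$j :])"
  have "det (\<chi> i j. poly (M$i$j) 1) = poly (det M) 1"
    by (rule det_hom) (simp_all add: poly_minus)
  moreover have "(\<chi> i j. poly (M$i$j) 1) = M2"
    by (simp add: M_def M2_def)
  ultimately have "det M2 = 0" using assms by (simp add: binary_det_def M_def)
  then obtain y where y0: "y \<noteq> 0" and My: "M2 *v y = 0" using poly_ker by blast
  define d where "d = (\<Sum>j\<in>UNIV. degree (y$j))"
  define v where "v = (\<lambda>k. \<chi> j. coeff (y$j) k)"
  have rowc: "(M2 *v y)$i = smult 0 0 + (\<Sum>j\<in>UNIV. smult (B$i$j) (y$j) + pCons 0 (smult (A$i$j) (y$j)))" for i
    by (simp add: M2_def matrix_vector_mult_def mult_pCons_left)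
  have c0: "(\<Sum>j\<in>UNIV. B$i$j * coeff (y$j) 0) = 0" for i
  proof -
    have "coeff ((M2 *v y)$i) 0 = (\<Sum>j\<in>UNIV. B$i$j * coeff (y$j) 0)"
      by (simp add: rowc coeff_sum)
    then show ?thesis using My by simp
  qed
  have cS: "(\<Sum>j\<in>UNIV. B$i$j * coeff (y$j) (Suc k)) + (\<Sum>j\<in>UNIV. A$i$j * coeff (y$j) k) = 0" for i k
  proof -
    have "coeff ((M2 *v y)$i) (Suc k) = (\<Sum>j\<in>UNIV. B$i$j * coeff (y$j) (Suc k)) + (\<Sum>j\<in>UNIV. A$i$j * coeff (y$j) k)"
      by (simp add: rowc coeff_sum sum.distrib)
    then show ?thesis using My by simp
  qed
  have "chain B A v d" unfolding chain_def
  proof (intro conjI allI impI)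
    show "v k = 0" if "d < k" for k
    proof -
      have "degree (y$j) \<le> d" for j unfolding d_def
        by (rule member_le_sum) auto
      then show ?thesis using that by (auto simp: v_def vec_eq_iff intro!: coeff_eq_0 intro: le_less_trans)
    qed
    obtain j where "y$j \<noteq> 0" using y0 by (auto simp: vec_eq_iff)
    then have "coeff (y$j) (degree (y$j)) \<noteq> 0" by (rule leading_coeff_neq_0)
    then have "v (degree (y$j)) $ j \<noteq> 0" by (simp add: v_def)
    then show "\<exists>k. v k \<noteq> 0" by (metis zero_index)
    show "B *v v 0 = 0" using c0 by (simp add: v_def vec_eq_iff matrix_vector_mult_def)
    show "B *v v (Suc k) + A *v v k = 0" for k
      using cS by (simp add: v_def vec_eq_iff matrix_vector_mult_def)
  qed
  then show ?thesis by blast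
qed

lemma hess_sym:
  assumes "is_hessian A Q" shows "A$i$j = A$j$i"
  using assms unfolding is_hessian_def by (auto simp: add.commute)

lemma hess_form:
  fixes A :: "'a::field^'n^'n"
  assumes "is_hessian A Q" and two: "(2::'a) \<noteq> 0"
  shows "Q x = vdot (A *v x) x / 2"
proof -
  obtain c where Qc: "\<And>x. Q x = (\<Sum>i\<in>UNIV. \<Sum>j\<in>UNIV. c i j * x$i * x$j)"
    and Ac: "\<And>i j. A$i$j = c i j + c j i"
    using assms(1) unfolding is_hessian_def by blast
  have "vdot (A *v x) x = (\<Sum>i\<in>UNIV. (\<Sum>j\<in>UNIV. A$i$j * x$j) * x$i)"
    by (simp add: vdot_def matrix_vector_mult_def)
  also have "\<dots> = (\<Sum>i\<in>UNIV. \<Sum>j\<in>UNIV. c i j * x$i * x$j + c j i * x$j * x$i)"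
    unfolding sum_distrib_right Ac by (intro sum.cong refl) (simp add: algebra_simps)
  also have "\<dots> = (\<Sum>i\<in>UNIV. \<Sum>j\<in>UNIV. c i j * x$i * x$j) + (\<Sum>i\<in>UNIV. \<Sum>j\<in>UNIV. c j i * x$j * x$i)"
    by (simp only: sum.distrib)
  also have "(\<Sum>i\<in>UNIV. \<Sum>j\<in>UNIV. c j i * x$j * x$i) = (\<Sum>j\<in>UNIV. \<Sum>i\<in>UNIV. c j i * x$j * x$i)"
    by (rule sum.swap)
  finally have "vdot (A *v x) x = 2 * Q x" by (simp add: Qc)
  then show ?thesis using two by simp
qed

lemma inv_of_ker:
  fixes N :: "'a::field^'n^'n"
  assumes "\<And>x. (\<chi> j. \<Sum>i\<in>UNIV. N$i$j * x$i) = 0 \<Longrightarrow> x = 0"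
  shows "invertible N"
proof -
  have "transpose N *v x = (\<chi> j. \<Sum>i\<in>UNIV. N$i$j * x$i)" for x
    by (simp add: matrix_vector_mult_def transpose_def)
  then have "\<forall>x. transpose N *v x = 0 \<longrightarrow> x = 0" using assms by simp
  then have "\<exists>B. B ** transpose N = mat 1" by (simp add: matrix_left_invertible_ker)
  then show ?thesis by (simp add: left_invertible_transpose invertible_right_inverse)
qed

lemma subst_sum: fixes N :: "'a::field^'n^'m" shows "(\<chi> j. \<Sum>i\<in>UNIV. N$i$j * x$i) = (\<Sum>i\<in>UNIV. x$i *s N$i)"
  unfolding vec_eq_iff by (auto intro!: sum.cong simp: mult.commute)

lemma pencil_setup:
  fixes A B :: "'a::field^'n^'n"
  assumes card: "CARD('n) \<le> 4"
    and sA: "\<And>i j. A$i$j = A$j$i" and sB: "\<And>i j. B$i$j = B$j$i"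
    and nc: "\<forall>v. A *v v = 0 \<and> B *v v = 0 \<longrightarrow> v = 0"
    and bd: "binary_det A B = 0"
  shows "\<exists>u w. A *v u = 0 \<and> B *v w = 0 \<and> B *v u = - (A *v w) \<and>
           (\<forall>p q. p *s u + q *s w = 0 \<longrightarrow> p = 0 \<and> q = 0)"
proof -
  obtain v d where ch: "chain B A v d" using bdet_chain[OF bd] by blast
  have nc': "\<forall>x. B *v x = 0 \<and> A *v x = 0 \<longrightarrow> x = 0" using nc by blast
  obtain w u where h: "B *v w = 0" "B *v u + A *v w = 0" "A *v u = 0" "w \<noteq> 0 \<or> u \<noteq> 0"
    using chain_min[OF card sB sA nc' ch] by blast
  have Bu: "B *v u = - (A *v w)" using h(2) by (simp add: eq_neg_iff_add_eq_0)
  have u0: "u \<noteq> 0"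
  proof
    assume "u = 0"
    then have "A *v w = 0" using Bu by simp
    then have "w = 0" using nc h(1) by blast
    then show False using h(4) \<open>u = 0\<close> by simp
  qed
  have ind: "p = 0 \<and> q = 0" if e: "p *s u + q *s w = 0" for p q
  proof -
    have "0 = A *v (p *s u + q *s w)" using e by simp
    also have "\<dots> = q *s (A *v w)" using h(3)
      by (simp add: matrix_vector_right_distrib vector_scalar_commute)
    finally have qA: "q *s (A *v w) = 0" by simp
    have q0: "q = 0"
    proof (rule ccontr)
      assume "q \<noteq> 0"
      then have "A *v w = 0" using qA by (simp add: vector_mul_eq_0)
      then have "B *v u = 0" using Bu by simp
      then have "u = 0" using nc h(3) by blast
      then show False using u0 by simp
    qed
    then have "p *s u = 0" using e by simp
    then have "p = 0" using u0 by (simp add: vector_mul_eq_0)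
    then show ?thesis using q0 by simp
  qed
  show ?thesis by (rule exI[of _ u], rule exI[of _ w]) (use h(1,3) Bu ind in auto)
qed

lemma invertible_mat1: "invertible (mat 1 :: 'a::field^'n^'n)"
  unfolding invertible_def by (rule exI[of _ "mat 1"]) simp

lemmas bil_simps = matrix_vector_right_distrib vector_scalar_commute vdot_add_left vdot_add_right
  vdot_scale_left vdot_scale_right

lemma vdot_swap:
  assumes "\<And>i j. A$i$j = A$j$i"
  shows "vdot (A *v x) y = vdot (A *v y) x"
  using vdot_sym_mat[OF assms, of x y] vdot_comm[of x "A *v y"] by simp

lemma quad4:
  fixes A :: "'a::field^'n^'n"
  assumes sA: "\<And>i j. A$i$j = A$j$i"
  shows "vdot (A *v (a *s x1 + b *s x2 + c *s x3 + d *s x4)) (a *s x1 + b *s x2 + c *s x3 + d *s x4) =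
     a*a*(vdot (A *v x1) x1) + b*b*(vdot (A *v x2) x2) + c*c*(vdot (A *v x3) x3) + d*d*(vdot (A *v x4) x4)
     + 2*a*b*(vdot (A *v x1) x2) + 2*a*c*(vdot (A *v x1) x3) + 2*a*d*(vdot (A *v x1) x4)
     + 2*b*c*(vdot (A *v x2) x3) + 2*b*d*(vdot (A *v x2) x4) + 2*c*d*(vdot (A *v x3) x4)"
proof -
  have s: "vdot (A *v x2) x1 = vdot (A *v x1) x2" "vdot (A *v x3) x1 = vdot (A *v x1) x3"
    "vdot (A *v x4) x1 = vdot (A *v x1) x4" "vdot (A *v x3) x2 = vdot (A *v x2) x3"
    "vdot (A *v x4) x2 = vdot (A *v x2) x4" "vdot (A *v x4) x3 = vdot (A *v x3) x4"
    by (rule vdot_swap[OF sA])+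
  show ?thesis unfolding bil_simps s by (simp add: algebra_simps)
qed

lemma quad3:
  fixes A :: "'a::field^'n^'n"
  assumes sA: "\<And>i j. A$i$j = A$j$i"
  shows "vdot (A *v (a *s x1 + b *s x2 + c *s x3)) (a *s x1 + b *s x2 + c *s x3) =
     a*a*(vdot (A *v x1) x1) + b*b*(vdot (A *v x2) x2) + c*c*(vdot (A *v x3) x3)
     + 2*a*b*(vdot (A *v x1) x2) + 2*a*c*(vdot (A *v x1) x3) + 2*b*c*(vdot (A *v x2) x3)"
proof -
  have s: "vdot (A *v x2) x1 = vdot (A *v x1) x2" "vdot (A *v x3) x1 = vdot (A *v x1) x3"
    "vdot (A *v x3) x2 = vdot (A *v x2) x3"
    by (rule vdot_swap[OF sA])+
  show ?thesis unfolding bil_simps s by (simp add: algebra_simps)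
qed

lemma case3:
  fixes Q1 Q2 :: "'a::field^3 \<Rightarrow> 'a" and A B :: "'a^3^3"
  assumes two: "(2::'a) \<noteq> 0" and hA: "is_hessian A Q1" and hB: "is_hessian B Q2"
    and nc: "\<forall>v. A *v v = 0 \<and> B *v v = 0 \<longrightarrow> v = 0" and bd: "binary_det A B = 0"
  shows "k_equiv Q1 Q2 (\<lambda>x. x$1 * x$2) (\<lambda>x. x$2 * x$3)"
proof -
  have sA: "\<And>i j. A$i$j = A$j$i" using hess_sym[OF hA] by blast
  have sB: "\<And>i j. B$i$j = B$j$i" using hess_sym[OF hB] by blast
  obtain u w where Au: "A *v u = 0" and Bw: "B *v w = 0" and Bu: "B *v u = - (A *v w)"
    and ind: "\<And>p q. p *s u + q *s w = 0 \<Longrightarrow> p = 0 \<and> q = 0"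
    using pencil_setup[OF _ sA sB nc bd] by auto
  define f where "f = A *v w"
  have Aw: "A *v w = f" by (simp add: f_def)
  have Bu': "B *v u = - f" using Bu by (simp add: f_def)
  have f0: "f \<noteq> 0"
  proof
    assume "f = 0"
    then have "A *v w = 0" by (simp add: f_def)
    then have "w = 0" using nc Bw by blast
    then have "0 *s u + 1 *s w = 0" by simp
    from ind[OF this] show False by simp
  qed
  then obtain k where fk: "f$k \<noteq> 0" by (auto simp: vec_eq_iff)
  define y where "y = (1 / f$k) *s axis k 1"
  have fy: "vdot f y = 1" using fk by (simp add: y_def vdot_scale_right vdot_axis)
  have fu: "vdot f u = 0" unfolding f_def by (simp add: vdot_sym_mat[OF sA] Au)
  have fw: "vdot f w = 0"
  proof -
    have "vdot f w = - vdot (B *v u) w" by (simp add: Bu' vdot_neg_left)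
    also have "\<dots> = - vdot u (B *v w)" by (simp add: vdot_sym_mat[OF sB])
    finally show ?thesis by (simp add: Bw)
  qed
  have Ayu: "vdot (A *v y) u = 0" by (simp add: vdot_sym_mat[OF sA] Au)
  have Ayw: "vdot (A *v y) w = 1"
  proof -
    have "vdot (A *v y) w = vdot y (A *v w)" by (rule vdot_sym_mat[OF sA])
    also have "\<dots> = vdot f y" by (simp add: Aw vdot_comm)
    finally show ?thesis using fy by simp
  qed
  have Byu: "vdot (B *v y) u = - 1"
  proof -
    have "vdot (B *v y) u = vdot y (B *v u)" by (rule vdot_sym_mat[OF sB])
    also have "\<dots> = - vdot f y" by (simp add: Bu' vdot_neg_right vdot_comm)
    finally show ?thesis using fy by simp
  qed
  have Byw: "vdot (B *v y) w = 0" by (simp add: vdot_sym_mat[OF sB] Bw)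
  define a where "a = vdot (A *v y) y"
  define b where "b = vdot (B *v y) y"
  define N :: "'a^3^3" where "N = (\<chi> i. if i = 1 then w else if i = 2 then y + (b/2) *s u - (a/2) *s w else - u)"
  define V where "V x = (\<chi> j. \<Sum>i\<in>UNIV. N$i$j * x$i)" for x :: "'a^3"
  have V: "V x = (x$1 - a/2 * x$2) *s w + x$2 *s y + (b/2 * x$2 - x$3) *s u" for x
    unfolding V_def subst_sum sum_3 N_def by (simp add: vec_eq_iff algebra_simps)
  have Q1V: "Q1 (V x) = x$1 * x$2" for x
  proof -
    have "Q1 (V x) = vdot (A *v V x) (V x) / 2" by (rule hess_form[OF hA two])
    also have "vdot (A *v V x) (V x) = 2 * (x$1 * x$2)"
      unfolding V quad3[OF sA] using two by (simp add: Au Aw fy fu fw Ayu a_def[symmetric] field_simps)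
    finally show ?thesis using two by simp
  qed
  have Q2V: "Q2 (V x) = x$2 * x$3" for x
  proof -
    have "Q2 (V x) = vdot (B *v V x) (V x) / 2" by (rule hess_form[OF hB two])
    also have "vdot (B *v V x) (V x) = 2 * (x$2 * x$3)"
      unfolding V quad3[OF sB] using two by (simp add: Bw Bu' vdot_neg_left fy fu fw Byu b_def[symmetric] field_simps)
    finally show ?thesis using two by simp
  qed
  have invN: "invertible N"
  proof (rule inv_of_ker)
    fix x :: "'a^3"
    assume "(\<chi> j. \<Sum>i\<in>UNIV. N$i$j * x$i) = 0"
    then have V0: "V x = 0" by (simp add: V_def)
    have "vdot f (V x) = x$2" unfolding V by (simp add: vdot_add_right vdot_diff_right vdot_scale_right fy fu fw)
    then have x2: "x$2 = 0" using V0 by simp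
    then have "(b/2 * x$2 - x$3) *s u + (x$1 - a/2 * x$2) *s w = 0" using V0 unfolding V by (simp add: add.commute)
    then have "b/2 * x$2 - x$3 = 0 \<and> x$1 - a/2 * x$2 = 0" by (rule ind)
    then show "x = 0" using x2 by (simp add: vec_eq_iff forall_3)
  qed
  show ?thesis unfolding k_equiv_def
    apply (rule exI[of _ "mat 1"], rule exI[of _ N])
    using invN invertible_mat1 Q1V Q2V by (simp add: V_def[symmetric] mat_def)
qed

lemma invertible_surj:
  fixes N :: "'a::field^'n^'n"
  assumes "invertible N"
  shows "\<exists>c. (\<chi> j. \<Sum>i\<in>UNIV. N$i$j * c$i) = x"
proof -
  obtain B where BN: "B ** N = mat 1" using assms unfolding invertible_def by blast
  have e: "(\<chi> j. \<Sum>i\<in>UNIV. N$i$j * c$i) = transpose N *v c" for c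
    by (simp add: matrix_vector_mult_def transpose_def)
  have "transpose N *v (transpose B *v x) = x"
    by (simp only: matrix_vector_mul_assoc matrix_transpose_mul[symmetric] BN transpose_mat matrix_vector_mul_lid)
  then show ?thesis unfolding e by blast
qed

lemma case4:
  fixes Q1 Q2 :: "'a::field^4 \<Rightarrow> 'a" and A B :: "'a^4^4"
  assumes two: "(2::'a) \<noteq> 0" and hA: "is_hessian A Q1" and hB: "is_hessian B Q2"
    and nc: "\<forall>v. A *v v = 0 \<and> B *v v = 0 \<longrightarrow> v = 0" and bd: "binary_det A B = 0"
  shows "k_equiv Q1 Q2 (\<lambda>x. x$1 * x$2) (\<lambda>x. x$2 * x$3 - x$4 ^ 2)"
proof -
  have sA: "\<And>i j. A$i$j = A$j$i" using hess_sym[OF hA] by blast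
  have sB: "\<And>i j. B$i$j = B$j$i" using hess_sym[OF hB] by blast
  obtain u w where Au: "A *v u = 0" and Bw: "B *v w = 0" and Bu: "B *v u = - (A *v w)"
    and ind: "\<And>p q. p *s u + q *s w = 0 \<Longrightarrow> p = 0 \<and> q = 0"
    using pencil_setup[OF _ sA sB nc bd] by auto
  define f where "f = A *v w"
  have Aw: "A *v w = f" by (simp add: f_def)
  have Bu': "B *v u = - f" using Bu by (simp add: f_def)
  have f0: "f \<noteq> 0"
  proof
    assume "f = 0"
    then have "A *v w = 0" by (simp add: f_def)
    then have "w = 0" using nc Bw by blast
    then have "0 *s u + 1 *s w = 0" by simp
    from ind[OF this] show False by simp
  qed
  then obtain k where fk: "f$k \<noteq> 0" by (auto simp: vec_eq_iff)
  define y where "y = (1 / f$k) *s axis k 1"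
  have fy: "vdot f y = 1" using fk by (simp add: y_def vdot_scale_right vdot_axis)
  have fu: "vdot f u = 0" unfolding f_def by (simp add: vdot_sym_mat[OF sA] Au)
  have fw: "vdot f w = 0"
  proof -
    have "vdot f w = - vdot (B *v u) w" by (simp add: Bu' vdot_neg_left)
    also have "\<dots> = - vdot u (B *v w)" by (simp add: vdot_sym_mat[OF sB])
    finally show ?thesis by (simp add: Bw)
  qed
  have Ayu: "vdot (A *v y) u = 0" by (simp add: vdot_sym_mat[OF sA] Au)
  have Ayw: "vdot (A *v y) w = 1"
  proof -
    have "vdot (A *v y) w = vdot y (A *v w)" by (rule vdot_sym_mat[OF sA])
    also have "\<dots> = vdot f y" by (simp add: Aw vdot_comm)
    finally show ?thesis using fy by simp
  qed
  have Byu: "vdot (B *v y) u = - 1"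
  proof -
    have "vdot (B *v y) u = vdot y (B *v u)" by (rule vdot_sym_mat[OF sB])
    also have "\<dots> = - vdot f y" by (simp add: Bu' vdot_neg_right vdot_comm)
    finally show ?thesis using fy by simp
  qed
  have Byw: "vdot (B *v y) w = 0" by (simp add: vdot_sym_mat[OF sB] Bw)
  have "\<exists>e. e \<notin> vec.span {u, w, y}"
  proof (rule ccontr)
    assume "\<not> ?thesis"
    then have "(UNIV :: ('a^4) set) \<subseteq> vec.span {u, w, y}" by auto
    then have "vec.dim (UNIV :: ('a^4) set) \<le> card {u, w, y}" by (rule vec.dim_le_card) simp
    moreover have "card {u, w, y} \<le> 3" by (auto simp: card_insert_if)
    moreover have "vec.dim (UNIV :: ('a^4) set) = 4" by (simp add: card_cart_basis)
    ultimately show False by simp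
  qed
  then obtain e where e: "e \<notin> vec.span {u, w, y}" by blast
  define z where "z = e - vdot f e *s y"
  have fz: "vdot f z = 0" by (simp add: z_def vdot_diff_right vdot_scale_right fy)
  have ind4: "c1 = 0 \<and> c2 = 0 \<and> c3 = 0 \<and> c4 = 0"
    if h: "c1 *s w + c2 *s y + c3 *s u + c4 *s z = 0" for c1 c2 c3 c4
  proof -
    have "vdot f (c1 *s w + c2 *s y + c3 *s u + c4 *s z) = c2"
      by (simp add: vdot_add_right vdot_scale_right fy fu fw fz)
    then have c2: "c2 = 0" using h by simp
    have c4: "c4 = 0"
    proof (rule ccontr)
      assume c4: "c4 \<noteq> 0"
      have "c4 *s z = - (c1 *s w + c3 *s u)" using h c2 by (simp add: eq_neg_iff_add_eq_0 algebra_simps)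
      then have "(1/c4) *s (c4 *s z) = (1/c4) *s (- (c1 *s w + c3 *s u))" by simp
      then have zz: "z = (- (c1/c4)) *s w + (- (c3/c4)) *s u" using c4
        by (simp add: vector_smult_assoc vector_smult_rneg vector_smult_lneg vector_add_ldistrib)
      have "e = z + vdot f e *s y" by (simp add: z_def)
      also have "\<dots> = (- (c1/c4)) *s w + (- (c3/c4)) *s u + vdot f e *s y" by (simp add: zz)
      finally have "e = (- (c1/c4)) *s w + (- (c3/c4)) *s u + vdot f e *s y" .
      moreover have "(- (c1/c4)) *s w + (- (c3/c4)) *s u + vdot f e *s y \<in> vec.span {u, w, y}"
        by (intro vec.span_add vec.span_scale vec.span_base) auto
      ultimately show False using e by simp
    qed
    have "c3 *s u + c1 *s w = 0" using h c2 c4 by (simp add: add.commute)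
    then have "c3 = 0 \<and> c1 = 0" by (rule ind)
    then show ?thesis using c2 c4 by simp
  qed
  define a where "a = vdot (A *v y) y"
  define b where "b = vdot (B *v y) y"
  define a12 where "a12 = vdot (A *v y) z"
  define b12 where "b12 = vdot (B *v y) z"
  define al where "al = vdot (A *v z) z / 2"
  define be where "be = vdot (B *v z) z / 2"
  have Azz: "vdot (A *v z) z = 2 * al" using two by (simp add: al_def)
  have Bzz: "vdot (B *v z) z = 2 * be" using two by (simp add: be_def)
  have Awz: "vdot (A *v w) z = 0" by (simp add: Aw fz)
  have Auz: "vdot (A *v u) z = 0" by (simp add: Au)
  have Buz: "vdot (B *v u) z = 0" by (simp add: Bu' vdot_neg_left fz)
  have Buu: "vdot (B *v u) u = 0" by (simp add: Bu' vdot_neg_left fu)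
  have Buy: "vdot (B *v u) y = - 1" by (simp add: Bu' vdot_neg_left fy)
  have albe: "al \<noteq> 0 \<or> be \<noteq> 0"
  proof (rule ccontr)
    assume "\<not> ?thesis"
    then have al0: "al = 0" and be0: "be = 0" by auto
    define N0 :: "'a^4^4" where "N0 = (\<chi> i. if i = 1 then w else if i = 2 then y else if i = 3 then u else z)"
    have N0e: "(\<chi> j. \<Sum>i\<in>UNIV. N0$i$j * c$i) = c$1 *s w + c$2 *s y + c$3 *s u + c$4 *s z" for c :: "'a^4"
      unfolding subst_sum sum_4 N0_def by (simp add: vec_eq_iff algebra_simps)
    have "invertible N0"
    proof (rule inv_of_ker)
      fix c :: "'a^4"
      assume "(\<chi> j. \<Sum>i\<in>UNIV. N0$i$j * c$i) = 0"
      then have "c$1 *s w + c$2 *s y + c$3 *s u + c$4 *s z = 0" by (simp add: N0e)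
      from ind4[OF this] show "c = 0" by (simp add: vec_eq_iff forall_4)
    qed
    define t where "t = z + b12 *s u - a12 *s w"
    have At: "vdot (A *v t) x = 0" for x
    proof -
      obtain c where "(\<chi> j. \<Sum>i\<in>UNIV. N0$i$j * c$i) = x" using invertible_surj[OF \<open>invertible N0\<close>] by blast
      then have x: "x = c$1 *s w + c$2 *s y + c$3 *s u + c$4 *s z" by (simp add: N0e)
      have t1: "vdot (A *v t) w = 0"
        by (simp add: t_def matrix_vector_right_distrib matrix_vector_mult_diff_distrib vector_scalar_commute
          vdot_add_left vdot_diff_left vdot_scale_left vdot_swap[OF sA, of z] Awz Au Aw fw fz)
      have t2: "vdot (A *v t) y = 0"
        by (simp add: t_def matrix_vector_right_distrib matrix_vector_mult_diff_distrib vector_scalar_commute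
          vdot_add_left vdot_diff_left vdot_scale_left vdot_swap[OF sA, of z] a12_def[symmetric] Au Aw fy)
      have t3: "vdot (A *v t) u = 0"
        by (simp add: t_def matrix_vector_right_distrib matrix_vector_mult_diff_distrib vector_scalar_commute
          vdot_add_left vdot_diff_left vdot_scale_left vdot_swap[OF sA, of z] Auz Au Aw fu)
      have t4: "vdot (A *v t) z = 0"
        by (simp add: t_def matrix_vector_right_distrib matrix_vector_mult_diff_distrib vector_scalar_commute
          vdot_add_left vdot_diff_left vdot_scale_left Azz al0 Au Aw fz)
      show ?thesis unfolding x by (simp add: vdot_add_right vdot_scale_right t1 t2 t3 t4)
    qed
    have Bt: "vdot (B *v t) x = 0" for x
    proof -
      obtain c where "(\<chi> j. \<Sum>i\<in>UNIV. N0$i$j * c$i) = x" using invertible_surj[OF \<open>invertible N0\<close>] by blast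
      then have x: "x = c$1 *s w + c$2 *s y + c$3 *s u + c$4 *s z" by (simp add: N0e)
      have Bzw: "vdot (B *v z) w = 0" by (simp add: vdot_swap[OF sB, of z] Bw)
      have Bzy: "vdot (B *v z) y = b12" by (simp add: vdot_swap[OF sB, of z] b12_def)
      have Bzu: "vdot (B *v z) u = 0" by (simp add: vdot_swap[OF sB, of z] Buz)
      have Byu': "vdot (B *v u) y = -1" by (rule Buy)
      have t1: "vdot (B *v t) w = 0"
        by (simp add: t_def matrix_vector_right_distrib matrix_vector_mult_diff_distrib vector_scalar_commute
          vdot_add_left vdot_diff_left vdot_scale_left Bzw Bw Bu' fw)
      have t2: "vdot (B *v t) y = 0"
        by (simp add: t_def matrix_vector_right_distrib matrix_vector_mult_diff_distrib vector_scalar_commute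
          vdot_add_left vdot_diff_left vdot_scale_left Bzy Bw Bu' vdot_neg_left fy)
      have t3: "vdot (B *v t) u = 0"
        by (simp add: t_def matrix_vector_right_distrib matrix_vector_mult_diff_distrib vector_scalar_commute
          vdot_add_left vdot_diff_left vdot_scale_left Bzu Bw Bu' vdot_neg_left fu)
      have t4: "vdot (B *v t) z = 0"
        by (simp add: t_def matrix_vector_right_distrib matrix_vector_mult_diff_distrib vector_scalar_commute
          vdot_add_left vdot_diff_left vdot_scale_left Bzz be0 Bw Bu' vdot_neg_left fz)
      show ?thesis unfolding x by (simp add: vdot_add_right vdot_scale_right t1 t2 t3 t4)
    qed
    have "A *v t = 0" by (rule vdot_all_zero) (use At in blast)
    moreover have "B *v t = 0" by (rule vdot_all_zero) (use Bt in blast)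
    ultimately have "t = 0" using nc by blast
    then have "(- a12) *s w + 0 *s y + b12 *s u + 1 *s z = 0"
      by (simp add: t_def algebra_simps vector_smult_lneg)
    from ind4[OF this] show False by simp
  qed
  obtain ep ze where hyp: "al * ep + be * ze = -1"
  proof (cases "al = 0")
    case True
    then have "be \<noteq> 0" using albe by simp
    then have "al * 0 + be * (- 1 / be) = -1" by simp
    then show ?thesis using that by blast
  next
    case False
    then have "al * (- 1 / al) + be * 0 = -1" by simp
    then show ?thesis using that by blast
  qed
  define M :: "'a^2^2" where "M = (\<chi> i j. if i = 1 then (if j = 1 then be else - al) else (if j = 1 then ep else ze))"
  have invM: "invertible M"
  proof -
    have "det M = be * ze + al * ep" by (simp add: det_2 M_def)
    then have "det M \<noteq> 0" using hyp by (simp add: add.commute)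
    then show ?thesis by (simp add: invertible_det_nz)
  qed
  define ha where "ha = a / 2"
  define hb where "hb = b / 2"
  have a2: "a = 2 * ha" using two by (simp add: ha_def)
  have b2: "b = 2 * hb" using two by (simp add: hb_def)
  define N :: "'a^4^4" where "N = (\<chi> i. if i = 1 then (- ep) *s u + (- ze) *s w
      else if i = 2 then hb *s u + (- ha) *s w + y
      else if i = 3 then be *s u + (- al) *s w else b12 *s u + (- a12) *s w + z)"
  define V where "V x = (\<chi> j. \<Sum>i\<in>UNIV. N$i$j * x$i)" for x :: "'a^4"
  define qf where "qf x = - ze * x$1 - ha * x$2 - al * x$3 - a12 * x$4" for x :: "'a^4"
  define pf where "pf x = - ep * x$1 + hb * x$2 + be * x$3 + b12 * x$4" for x :: "'a^4"
  have V: "V x = qf x *s w + x$2 *s y + pf x *s u + x$4 *s z" for x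
    unfolding V_def subst_sum sum_4 N_def qf_def pf_def by (simp add: vec_eq_iff algebra_simps)
  have Ayz: "vdot (A *v y) z = a12" by (simp add: a12_def)
  have Byz: "vdot (B *v y) z = b12" by (simp add: b12_def)
  have E1: "vdot (A *v V x) (V x) = 2*qf x*x$2 + 2*ha*x$2*x$2 + 2*a12*x$2*x$4 + 2*al*x$4*x$4" for x
    unfolding V quad4[OF sA] by (simp add: Aw Au fw fy fu fz Ayu Ayz Azz a_def[symmetric] a2)
  have E2: "vdot (B *v V x) (V x) = 2*hb*x$2*x$2 - 2*x$2*pf x + 2*b12*x$2*x$4 + 2*be*x$4*x$4" for x
    unfolding V quad4[OF sB] by (simp add: Bw Bu' vdot_neg_left fu fz Byu Byz Bzz b_def[symmetric] b2 algebra_simps)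
  have Q1V: "2 * Q1 (V x) = vdot (A *v V x) (V x)" for x using hess_form[OF hA two, of "V x"] two by (simp add: mult.commute)
  have Q2V: "2 * Q2 (V x) = vdot (B *v V x) (V x)" for x using hess_form[OF hB two, of "V x"] two by (simp add: mult.commute)
  have P1: "x$1 * x$2 = be * Q1 (V x) + (- al) * Q2 (V x)" for x
  proof -
    have "2 * (be * Q1 (V x) + (- al) * Q2 (V x)) = be * (2 * Q1 (V x)) - al * (2 * Q2 (V x))"
      by (simp add: algebra_simps)
    also have "\<dots> = 2 * x$2 * x$1 * (- (al * ep + be * ze))"
      unfolding Q1V Q2V E1 E2 qf_def pf_def by (simp add: algebra_simps)
    also have "\<dots> = 2 * (x$1 * x$2)" using hyp by simp
    finally have "2 * (be * Q1 (V x) + (- al) * Q2 (V x)) = 2 * (x$1 * x$2)" .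
    then show ?thesis using two by (metis mult_left_cancel)
  qed
  have P2: "x$2 * x$3 - x$4 ^ 2 = ep * Q1 (V x) + ze * Q2 (V x)" for x
  proof -
    have "2 * (ep * Q1 (V x) + ze * Q2 (V x)) = ep * (2 * Q1 (V x)) + ze * (2 * Q2 (V x))"
      by (simp add: algebra_simps)
    also have "\<dots> = 2 * (x$2 * x$3 - x$4 ^ 2) * (- (al * ep + be * ze))"
      unfolding Q1V Q2V E1 E2 qf_def pf_def by (simp add: algebra_simps power2_eq_square)
    also have "\<dots> = 2 * (x$2 * x$3 - x$4 ^ 2)" using hyp by simp
    finally have "2 * (ep * Q1 (V x) + ze * Q2 (V x)) = 2 * (x$2 * x$3 - x$4 ^ 2)" .
    then show ?thesis using two by (metis mult_left_cancel)
  qed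
  have invN: "invertible N"
  proof (rule inv_of_ker)
    fix x :: "'a^4"
    assume "(\<chi> j. \<Sum>i\<in>UNIV. N$i$j * x$i) = 0"
    then have "qf x *s w + x$2 *s y + pf x *s u + x$4 *s z = 0" by (simp add: V_def[symmetric] V)
    from ind4[OF this] have h: "qf x = 0" "x$2 = 0" "pf x = 0" "x$4 = 0" by auto
    have "be * qf x + al * pf x = - (al * ep + be * ze) * x$1" using h(2,4) unfolding qf_def pf_def
      by (simp add: algebra_simps)
    then have "x$1 = be * qf x + al * pf x" using hyp by simp
    then have x1: "x$1 = 0" using h by simp
    have "ep * qf x - ze * pf x = - (al * ep + be * ze) * x$3" using h(2,4) unfolding qf_def pf_def
      by (simp add: algebra_simps)
    then have "x$3 = ep * qf x - ze * pf x" using hyp by simp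
    then have x3: "x$3 = 0" using h by simp
    show "x = 0" using x1 x3 h(2,4) by (simp add: vec_eq_iff forall_4)
  qed
  have M11: "M$1$1 = be" and M12: "M$1$2 = - al" and M21: "M$2$1 = ep" and M22: "M$2$2 = ze"
    by (simp_all add: M_def)
  show ?thesis unfolding k_equiv_def
  proof (rule exI[of _ M], rule exI[of _ N], intro conjI allI)
    show "invertible M" by (rule invM)
    show "invertible N" by (rule invN)
    fix x :: "'a^4"
    show "x$1 * x$2 = M$1$1 * Q1 (\<chi> j. \<Sum>i\<in>UNIV. N$i$j * x$i) + M$1$2 * Q2 (\<chi> j. \<Sum>i\<in>UNIV. N$i$j * x$i)"
      unfolding V_def[symmetric] M11 M12 by (rule P1)
    show "x$2 * x$3 - x$4 ^ 2 = M$2$1 * Q1 (\<chi> j. \<Sum>i\<in>UNIV. N$i$j * x$i) + M$2$2 * Q2 (\<chi> j. \<Sum>i\<in>UNIV. N$i$j * x$i)"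
      unfolding V_def[symmetric] M21 M22 by (rule P2)
  qed
qed

theorem lemma4p11:
  fixes Q1 Q2 :: "'a::field ^ 3 \<Rightarrow> 'a" and A B :: "'a ^ 3 ^ 3"
    and R1 R2 :: "'a ^ 4 \<Rightarrow> 'a" and C D :: "'a ^ 4 ^ 4"
  assumes char: "(2::'a) \<noteq> 0"
  shows "(is_quadratic_form Q1 \<and> is_quadratic_form Q2 \<and> is_hessian A Q1 \<and> is_hessian B Q2 \<and>
          (\<forall>v. A *v v = 0 \<and> B *v v = 0 \<longrightarrow> v = 0) \<and> binary_det A B = 0
          \<longrightarrow> k_equiv Q1 Q2 (\<lambda>x. x$1 * x$2) (\<lambda>x. x$2 * x$3))
       \<and> (is_quadratic_form R1 \<and> is_quadratic_form R2 \<and> is_hessian C R1 \<and> is_hessian D R2 \<and>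
          (\<forall>v. C *v v = 0 \<and> D *v v = 0 \<longrightarrow> v = 0) \<and> binary_det C D = 0
          \<longrightarrow> k_equiv R1 R2 (\<lambda>x. x$1 * x$2) (\<lambda>x. x$2 * x$3 - x$4 ^ 2))"
proof (intro conjI impI)
  assume h: "is_quadratic_form Q1 \<and> is_quadratic_form Q2 \<and> is_hessian A Q1 \<and> is_hessian B Q2 \<and>
          (\<forall>v. A *v v = 0 \<and> B *v v = 0 \<longrightarrow> v = 0) \<and> binary_det A B = 0"
  then have hA: "is_hessian A Q1" and hB: "is_hessian B Q2"
    and nc: "\<forall>v. A *v v = 0 \<and> B *v v = 0 \<longrightarrow> v = 0" and bd: "binary_det A B = 0" by blast+
  show "k_equiv Q1 Q2 (\<lambda>x. x$1 * x$2) (\<lambda>x. x$2 * x$3)" by (rule case3[OF char hA hB nc bd])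
next
  assume h: "is_quadratic_form R1 \<and> is_quadratic_form R2 \<and> is_hessian C R1 \<and> is_hessian D R2 \<and>
          (\<forall>v. C *v v = 0 \<and> D *v v = 0 \<longrightarrow> v = 0) \<and> binary_det C D = 0"
  then have hC: "is_hessian C R1" and hD: "is_hessian D R2"
    and nc: "\<forall>v. C *v v = 0 \<and> D *v v = 0 \<longrightarrow> v = 0" and bd: "binary_det C D = 0" by blast+
  show "k_equiv R1 R2 (\<lambda>x. x$1 * x$2) (\<lambda>x. x$2 * x$3 - x$4 ^ 2)" by (rule case4[OF char hC hD nc bd])
qed

end
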